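(* Let $X$ be a separable Hilbert space and $f(z)=\sum_{k\ge1}a_kz^{n_k}\in H^2(\mathbb{D},X)$ a lacunary series with all $a_k\neq0$ and infinitely many terms (so $f$ is not a polynomial), such that the sequence $(a_k/\|a_k\|)_{k\ge1}$ is relatively compact in $X$. Then there exists $x\in X$, $x\neq0$, such that $$H^2\otimes x\subset E_{S^{*N}f}\quad\text{for all }N\ge0.$$
   Context: $H^2(\mathbb{D},X)$: $X$-valued power series with square-summable coefficient norms; $S^*$ the backward shift $\sum\hat f(n)z^n\mapsto\sum \hat f(n+1)z^n$; $E_g$ the closed linear span of $\{S^{*n}g:n\ge0\}$. Lacunary: $n_{k+1}/n_k\ge d>1$ for all $k$. $H^2\otimes x=\{hx: h\in H^2\}$ where $H^2$ is the scalar Hardy space. *)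

theory Defs
  imports "HOL-Analysis.Analysis"
begin

text \<open>A complex Hilbert space is encoded as a real Hilbert space (type class
  real_inner + complete_space) together with a complex structure J
  (real-linear, isometric, J (J x) = - x), playing the role of multiplication by i.\<close>

definition complex_structure :: "('a::real_inner \<Rightarrow> 'a) \<Rightarrow> bool" where
  "complex_structure J \<longleftrightarrow> linear J \<and> (\<forall>x. J (J x) = - x) \<and> (\<forall>x. norm (J x) = norm x)"

definition cscale :: "('a::real_vector \<Rightarrow> 'a) \<Rightarrow> complex \<Rightarrow> 'a \<Rightarrow> 'a" where
  "cscale J c x = Re c *\<^sub>R x + Im c *\<^sub>R J x"

definition separable_space :: "'a::topological_space itself \<Rightarrow> bool" where
  "separable_space _ \<longleftrightarrow> (\<exists>D::'a set. countable D \<and> closure D = UNIV)"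

text \<open>Elements of H^2(D,X) identified with their Taylor coefficient sequences.\<close>
definition H2 :: "(nat \<Rightarrow> 'a::real_normed_vector) set" where
  "H2 = {f. summable (\<lambda>n. (norm (f n))\<^sup>2)}"

definition H2dist :: "(nat \<Rightarrow> 'a::real_normed_vector) \<Rightarrow> (nat \<Rightarrow> 'a) \<Rightarrow> real" where
  "H2dist f g = sqrt (\<Sum>n. (norm (f n - g n))\<^sup>2)"

definition bshift :: "(nat \<Rightarrow> 'a) \<Rightarrow> (nat \<Rightarrow> 'a)" where
  "bshift f = (\<lambda>n. f (Suc n))"

definition shift_span :: "('a::real_vector \<Rightarrow> 'a) \<Rightarrow> (nat \<Rightarrow> 'a) \<Rightarrow> (nat \<Rightarrow> 'a) set" where
  "shift_span J g = {p. \<exists>(c::nat \<Rightarrow> complex) M.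
      p = (\<lambda>j. \<Sum>n<M. cscale J (c n) ((bshift ^^ n) g j))}"

definition Egen :: "('a::real_normed_vector \<Rightarrow> 'a) \<Rightarrow> (nat \<Rightarrow> 'a) \<Rightarrow> (nat \<Rightarrow> 'a) set" where
  "Egen J g = {h \<in> H2. \<forall>e>0. \<exists>p \<in> shift_span J g. H2dist h p < e}"

definition H2_tensor :: "('a::real_vector \<Rightarrow> 'a) \<Rightarrow> 'a \<Rightarrow> (nat \<Rightarrow> 'a) set" where
  "H2_tensor J x = {(\<lambda>n. cscale J (h n) x) | h::nat \<Rightarrow> complex. summable (\<lambda>n. (cmod (h n))\<^sup>2)}"

end

theory Submission
  imports Defs
begin


lemma H2_zero: "(\<lambda>n. 0) \<in> H2" by (simp add: H2_def)

lemma sq_sum_le: "((a::real) + b)\<^sup>2 \<le> 2 * a\<^sup>2 + 2 * b\<^sup>2"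
proof -
  have "0 \<le> (a - b)\<^sup>2" by simp
  thus ?thesis by (simp add: power2_eq_square algebra_simps)
qed

lemma H2_add: "f \<in> H2 \<Longrightarrow> g \<in> H2 \<Longrightarrow> (\<lambda>n. f n + g n) \<in> H2"
  unfolding H2_def
proof (clarsimp)
  assume a: "summable (\<lambda>n. (norm (f n))\<^sup>2)" "summable (\<lambda>n. (norm (g n))\<^sup>2)"
  show "summable (\<lambda>n. (norm (f n + g n))\<^sup>2)"
  proof (rule summable_comparison_test'[where g="\<lambda>n. 2*(norm (f n))\<^sup>2 + 2*(norm (g n))\<^sup>2"])
    show "summable (\<lambda>n. 2*(norm (f n))\<^sup>2 + 2*(norm (g n))\<^sup>2)"
      using a by (intro summable_add summable_mult) auto
    fix n
    have "(norm (f n + g n))\<^sup>2 \<le> (norm (f n) + norm (g n))\<^sup>2"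
      by (simp add: norm_triangle_ineq power_mono)
    also have "\<dots> \<le> 2*(norm (f n))\<^sup>2 + 2*(norm (g n))\<^sup>2" by (rule sq_sum_le)
    finally show "norm ((norm (f n + g n))\<^sup>2) \<le> 2*(norm (f n))\<^sup>2 + 2*(norm (g n))\<^sup>2" by simp
  qed
qed

lemma H2_scale: "f \<in> H2 \<Longrightarrow> (\<lambda>n. c *\<^sub>R f n) \<in> H2"
  unfolding H2_def by (simp add: power_mult_distrib summable_mult)

lemma H2_uminus: "f \<in> H2 \<Longrightarrow> (\<lambda>n. - f n) \<in> H2"
  unfolding H2_def by simp

lemma H2_diff: "f \<in> H2 \<Longrightarrow> g \<in> H2 \<Longrightarrow> (\<lambda>n. f n - g n) \<in> H2"
  using H2_add[of f "\<lambda>n. - g n"] H2_uminus[of g] by simp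

lemma H2_summable: "f \<in> H2 \<Longrightarrow> summable (\<lambda>n. (norm (f n))\<^sup>2)"
  by (simp add: H2_def)

lemma H2_inner_summable:
  fixes f g :: "nat \<Rightarrow> 'a::real_inner"
  assumes "f \<in> H2" "g \<in> H2"
  shows "summable (\<lambda>n. inner (f n) (g n))"
proof (rule summable_comparison_test'[where g="\<lambda>n. (norm (f n))\<^sup>2 + (norm (g n))\<^sup>2"])
  show "summable (\<lambda>n. (norm (f n))\<^sup>2 + (norm (g n))\<^sup>2)"
    using assms by (intro summable_add) (auto simp: H2_def)
  fix n
  have "\<bar>inner (f n) (g n)\<bar> \<le> norm (f n) * norm (g n)" by (rule Cauchy_Schwarz_ineq2)
  also have "\<dots> \<le> (norm (f n))\<^sup>2 + (norm (g n))\<^sup>2"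
  proof -
    have "0 \<le> (norm (f n) - norm (g n))\<^sup>2" by simp
    hence "2*(norm (f n) * norm (g n)) \<le> (norm (f n))\<^sup>2 + (norm (g n))\<^sup>2"
      by (simp add: power2_eq_square algebra_simps)
    moreover have "0 \<le> norm (f n) * norm (g n)" by simp
    ultimately show ?thesis by linarith
  qed
  finally show "norm (inner (f n) (g n)) \<le> (norm (f n))\<^sup>2 + (norm (g n))\<^sup>2" by simp
qed

typedef (overloaded) 'a l2 = "H2 :: (nat \<Rightarrow> 'a::real_inner) set" morphisms vec mk
  using H2_zero by blast

setup_lifting type_definition_l2

instantiation l2 :: (real_inner) real_inner
begin
lift_definition zero_l2 :: "'a l2" is "\<lambda>n. 0" by (rule H2_zero)
lift_definition plus_l2 :: "'a l2 \<Rightarrow> 'a l2 \<Rightarrow> 'a l2" is "\<lambda>f g n. f n + g n" by (rule H2_add)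
lift_definition minus_l2 :: "'a l2 \<Rightarrow> 'a l2 \<Rightarrow> 'a l2" is "\<lambda>f g n. f n - g n" by (rule H2_diff)
lift_definition uminus_l2 :: "'a l2 \<Rightarrow> 'a l2" is "\<lambda>f n. - f n" by (rule H2_uminus)
lift_definition scaleR_l2 :: "real \<Rightarrow> 'a l2 \<Rightarrow> 'a l2" is "\<lambda>c f n. c *\<^sub>R f n" by (rule H2_scale)
lift_definition inner_l2 :: "'a l2 \<Rightarrow> 'a l2 \<Rightarrow> real" is "\<lambda>f g. \<Sum>n. inner (f n) (g n)" .
definition norm_l2 :: "'a l2 \<Rightarrow> real" where "norm_l2 x = sqrt (inner x x)"
definition sgn_l2 :: "'a l2 \<Rightarrow> 'a l2" where "sgn_l2 x = scaleR (inverse (norm x)) x"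
definition dist_l2 :: "'a l2 \<Rightarrow> 'a l2 \<Rightarrow> real" where "dist_l2 x y = norm (x - y)"
definition uniformity_l2 :: "('a l2 \<times> 'a l2) filter" where
  "uniformity_l2 = (INF e\<in>{0 <..}. principal {(x, y). dist x y < e})"
definition open_l2 :: "'a l2 set \<Rightarrow> bool" where
  "open_l2 U = (\<forall>x\<in>U. eventually (\<lambda>(x', y). x' = x \<longrightarrow> y \<in> U) uniformity)"
instance
proof
  fix x y z :: "'a l2" and a b :: real
  show "x + y + z = x + (y + z)" by transfer (simp add: add.assoc)
  show "x + y = y + x" by transfer (simp add: add.commute)
  show "0 + x = x" by transfer simp
  show "- x + x = 0" by transfer simp
  show "x - y = x + - y" by transfer simp
  show "a *\<^sub>R (x + y) = a *\<^sub>R x + a *\<^sub>R y" by transfer (simp add: scaleR_add_right)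
  show "(a + b) *\<^sub>R x = a *\<^sub>R x + b *\<^sub>R x" by transfer (simp add: scaleR_add_left)
  show "a *\<^sub>R b *\<^sub>R x = (a * b) *\<^sub>R x" by transfer simp
  show "1 *\<^sub>R x = x" by transfer simp
  show "dist x y = norm (x - y)" by (simp add: dist_l2_def)
  show "inner x y = inner y x" by transfer (simp add: inner_commute)
  show "inner (x + y) z = inner x z + inner y z"
    by transfer (simp add: inner_add_left suminf_add H2_inner_summable)
  show "inner (a *\<^sub>R x) y = a * inner x y"
    by transfer (simp add: suminf_mult H2_inner_summable)
  show "0 \<le> inner x x"
    by transfer (auto intro!: suminf_nonneg H2_inner_summable)
  show "inner x x = 0 \<longleftrightarrow> x = 0"
  proof transfer
    fix f :: "nat \<Rightarrow> 'a" assume f: "f \<in> H2"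
    have s: "summable (\<lambda>n. inner (f n) (f n))" using H2_inner_summable[OF f f] .
    show "((\<Sum>n. inner (f n) (f n)) = 0) = (f = (\<lambda>n. 0))"
      using suminf_eq_zero_iff[OF s] by (auto simp: fun_eq_iff)
  qed
  show "norm x = sqrt (inner x x)" by (simp add: norm_l2_def)
qed (simp_all add: uniformity_l2_def open_l2_def sgn_l2_def)
end

lemma inner_l2_vec: "inner x y = (\<Sum>n. inner (vec x n) (vec y n))"
  by transfer simp

lemma vec_in: "vec x \<in> H2" using vec by auto

lemma norm_l2_sq: "(norm x)\<^sup>2 = (\<Sum>n. (norm (vec x n))\<^sup>2)"
  by (simp add: power2_norm_eq_inner inner_l2_vec)

lemma vec_minus: "vec (x - y) n = vec x n - vec y n" by transfer simp
lemma vec_plus: "vec (x + y) n = vec x n + vec y n" by transfer simp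
lemma vec_scale: "vec (c *\<^sub>R x) n = c *\<^sub>R vec x n" by transfer simp
lemma vec_mk: "f \<in> H2 \<Longrightarrow> vec (mk f) = f" by (simp add: mk_inverse)

lemma norm_coord: "norm (vec x n) \<le> norm x"
proof -
  have "(norm (vec x n))\<^sup>2 = (\<Sum>i\<in>{n}. (norm (vec x i))\<^sup>2)" by simp
  also have "\<dots> \<le> (\<Sum>n. (norm (vec x n))\<^sup>2)"
    by (rule sum_le_suminf) (auto intro: H2_summable[OF vec_in])
  finally have "(norm (vec x n))\<^sup>2 \<le> (norm x)\<^sup>2" by (simp add: norm_l2_sq)
  thus ?thesis by (simp add: power2_le_iff_abs_le)
qed

instance l2 :: ("{real_inner,complete_space}") complete_space
proof
  fix X :: "nat \<Rightarrow> 'a l2"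
  assume C: "Cauchy X"
  have Cn: "Cauchy (\<lambda>i. vec (X i) n)" for n
  proof (rule CauchyI)
    fix e :: real assume "0 < e"
    then obtain M where M: "\<forall>m\<ge>M. \<forall>k\<ge>M. norm (X m - X k) < e" using CauchyD[OF C] by blast
    show "\<exists>M. \<forall>m\<ge>M. \<forall>k\<ge>M. norm (vec (X m) n - vec (X k) n) < e"
      using M norm_coord[of "X _ - X _" n] by (metis vec_minus order.strict_trans1)
  qed
  define L where "L n = lim (\<lambda>i. vec (X i) n)" for n
  have LL: "(\<lambda>i. vec (X i) n) \<longlonglongrightarrow> L n" for n
    unfolding L_def using Cn[of n] by (simp add: Cauchy_convergent_iff convergent_LIMSEQ_iff)
  have key: "\<exists>M. \<forall>i\<ge>M. (\<lambda>n. vec (X i) n - L n) \<in> H2 \<and> (\<Sum>n. (norm (vec (X i) n - L n))\<^sup>2) \<le> e\<^sup>2"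
    if e: "0 < e" for e
  proof -
    obtain M where M: "\<forall>m\<ge>M. \<forall>k\<ge>M. norm (X m - X k) < e" using CauchyD[OF C e] by blast
    have "(\<lambda>n. vec (X i) n - L n) \<in> H2 \<and> (\<Sum>n. (norm (vec (X i) n - L n))\<^sup>2) \<le> e\<^sup>2"
      if i: "i \<ge> M" for i
    proof -
      have bnd: "(\<Sum>n<P. (norm (vec (X i) n - L n))\<^sup>2) \<le> e\<^sup>2" for P
      proof -
        have lim: "(\<lambda>j. \<Sum>n<P. (norm (vec (X i) n - vec (X j) n))\<^sup>2) \<longlonglongrightarrow> (\<Sum>n<P. (norm (vec (X i) n - L n))\<^sup>2)"
          by (intro tendsto_intros LL)
        have "(\<Sum>n<P. (norm (vec (X i) n - vec (X j) n))\<^sup>2) \<le> e\<^sup>2" if j: "j \<ge> M" for j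
        proof -
          have "(\<Sum>n<P. (norm (vec (X i) n - vec (X j) n))\<^sup>2) = (\<Sum>n<P. (norm (vec (X i - X j) n))\<^sup>2)"
            by (simp add: vec_minus)
          also have "\<dots> \<le> (\<Sum>n. (norm (vec (X i - X j) n))\<^sup>2)"
            by (rule sum_le_suminf) (auto intro: H2_summable[OF vec_in])
          also have "\<dots> = (norm (X i - X j))\<^sup>2" by (simp add: norm_l2_sq)
          also have "\<dots> \<le> e\<^sup>2" using M i j
            by (intro power_mono) (auto simp: less_imp_le)
          finally show ?thesis .
        qed
        then show ?thesis
          by (intro LIMSEQ_le_const2[OF lim]) auto
      qed
      have s: "summable (\<lambda>n. (norm (vec (X i) n - L n))\<^sup>2)"
        by (rule summableI_nonneg_bounded[where x="e\<^sup>2"]) (use bnd in auto)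
      show ?thesis using s bnd by (auto simp: H2_def intro: suminf_le_const)
    qed
    thus ?thesis by blast
  qed
  obtain M1 where M1: "\<forall>i\<ge>M1. (\<lambda>n. vec (X i) n - L n) \<in> H2" using key[of 1] by auto
  have LH: "L \<in> H2"
    using H2_diff[OF vec_in[of "X M1"] M1[rule_format, of M1]] by simp
  have "X \<longlonglongrightarrow> mk L"
  proof (rule LIMSEQ_I)
    fix r :: real assume r: "0 < r"
    obtain M where M: "\<forall>i\<ge>M. (\<lambda>n. vec (X i) n - L n) \<in> H2 \<and> (\<Sum>n. (norm (vec (X i) n - L n))\<^sup>2) \<le> (r/2)\<^sup>2"
      using key[of "r/2"] r by auto
    have "norm (X i - mk L) < r" if "i \<ge> M" for i
    proof -
      have "(norm (X i - mk L))\<^sup>2 = (\<Sum>n. (norm (vec (X i) n - L n))\<^sup>2)"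
        by (simp add: norm_l2_sq vec_minus vec_mk[OF LH])
      also have "\<dots> \<le> (r/2)\<^sup>2" using M that by auto
      finally have "(norm (X i - mk L))\<^sup>2 \<le> (r/2)\<^sup>2" .
      hence "norm (X i - mk L) \<le> r/2" using r by (simp add: power2_le_iff_abs_le)
      thus ?thesis using r by simp
    qed
    thus "\<exists>no. \<forall>n\<ge>no. norm (X n - mk L) < r" by blast
  qed
  thus "convergent X" by (auto simp: convergent_def)
qed




lemma parallelogram_sq:
  fixes a b :: "'b::real_inner"
  shows "(norm (a - b))\<^sup>2 + (norm (a + b))\<^sup>2 = 2 * (norm a)\<^sup>2 + 2 * (norm b)\<^sup>2"
  by (simp add: power2_norm_eq_inner inner_diff_left inner_diff_right inner_add_left inner_add_right inner_commute)

lemma norm_add_scale_sq: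
  fixes h q :: "'b::real_inner"
  shows "(norm (h + t *\<^sub>R q))\<^sup>2 = (norm h)\<^sup>2 + 2 * t * inner h q + t\<^sup>2 * (norm q)\<^sup>2"
  unfolding power2_norm_eq_inner
  by (simp add: inner_add_left inner_add_right inner_commute power2_eq_square algebra_simps)

lemma quad_nonneg_zero:
  fixes a Q :: real
  assumes "Q \<ge> 0" and "\<And>t. 0 \<le> 2 * t * a + t\<^sup>2 * Q"
  shows "a = 0"
proof (rule ccontr)
  assume a: "a \<noteq> 0"
  define t where "t = - a / (Q + 1)"
  have Q1: "Q + 1 > 0" using assms by simp
  have "0 \<le> 2 * t * a + t\<^sup>2 * Q" by (rule assms(2))
  hence "0 \<le> (2 * t * a + t\<^sup>2 * Q) * (Q+1)^2" using Q1 by simp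
  also have "(2 * t * a + t\<^sup>2 * Q) * (Q+1)^2 = 2*a*(t*(Q+1))*(Q+1) + Q*(t*(Q+1))^2"
    by (simp add: power2_eq_square algebra_simps)
  also have "t * (Q+1) = -a" unfolding t_def using Q1 by simp
  also have "2*a*(-a)*(Q+1) + Q*(-a)^2 = a\<^sup>2 * (- Q - 2)"
    by (simp add: power2_eq_square algebra_simps)
  finally have "0 \<le> a\<^sup>2 * (- Q - 2)" .
  moreover have "a\<^sup>2 > 0" using a by simp
  ultimately show False using assms(1) by (simp add: zero_le_mult_iff)
qed

lemma half_half: "(1/2::real) *\<^sub>R x + (1/2) *\<^sub>R x = (x::'b::real_vector)"
proof -
  have "(1/2::real) *\<^sub>R x + (1/2) *\<^sub>R x = ((1/2::real) + 1/2) *\<^sub>R x" by (simp only: scaleR_add_left)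
  also have "\<dots> = x" by simp
  finally show ?thesis .
qed

lemma proj_orth:
  fixes w :: "'b::{real_inner,complete_space}" and S :: "'b set"
  assumes add: "\<And>p q. p \<in> S \<Longrightarrow> q \<in> S \<Longrightarrow> p + q \<in> S"
    and sc: "\<And>c p. p \<in> S \<Longrightarrow> c *\<^sub>R p \<in> S" and ne: "pz \<in> S"
    and e: "0 < e" and far: "\<And>p. p \<in> S \<Longrightarrow> e \<le> norm (w - p)"
  shows "\<exists>h. (\<forall>q\<in>S. inner h q = 0) \<and> inner h w \<noteq> 0"
proof -
  define F where "F = (\<lambda>p. (norm (w - p))\<^sup>2) ` S"
  define D where "D = Inf F"
  have Fne: "F \<noteq> {}" using ne by (auto simp: F_def)
  have bdd: "bdd_below F" unfolding F_def by (rule bdd_belowI[where m=0]) auto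
  have De: "e\<^sup>2 \<le> D" unfolding D_def
    by (rule cInf_greatest[OF Fne]) (use far e in \<open>auto simp: F_def intro!: power_mono\<close>)
  have Dle: "D \<le> (norm (w - p))\<^sup>2" if "p \<in> S" for p
    unfolding D_def by (rule cInf_lower[OF _ bdd]) (use that in \<open>auto simp: F_def\<close>)
  have "\<exists>p\<in>S. (norm (w - p))\<^sup>2 < D + inverse (real (Suc i))" for i
  proof -
    have "Inf F < D + inverse (real (Suc i))" by (simp add: D_def)
    from cInf_lessD[OF Fne this] show ?thesis by (auto simp: F_def)
  qed
  then obtain P where P: "\<And>i. P i \<in> S" "\<And>i. (norm (w - P i))\<^sup>2 < D + inverse (real (Suc i))"
    by metis
  define H where "H i = w - P i" for i
  have HD: "D \<le> (norm (H i))\<^sup>2" for i using Dle[OF P(1)] by (simp add: H_def)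
  have Hd: "(norm (H i - H j))\<^sup>2 \<le> 2 * inverse (real (Suc i)) + 2 * inverse (real (Suc j))" for i j
  proof -
    have m: "(1/2) *\<^sub>R (P i + P j) \<in> S" using add[OF P(1) P(1)] sc by blast
    have "D \<le> (norm (w - (1/2) *\<^sub>R (P i + P j)))\<^sup>2" by (rule Dle[OF m])
    also have "w - (1/2) *\<^sub>R (P i + P j) = (1/2) *\<^sub>R (H i + H j)"
      using half_half[of w] by (simp add: H_def algebra_simps)
    also have "(norm ((1/2) *\<^sub>R (H i + H j)))\<^sup>2 = (norm (H i + H j))\<^sup>2 / 4"
      by (simp add: power2_eq_square)
    finally have "4 * D \<le> (norm (H i + H j))\<^sup>2" by simp
    moreover have "(norm (H i - H j))\<^sup>2 + (norm (H i + H j))\<^sup>2 = 2 * (norm (H i))\<^sup>2 + 2 * (norm (H j))\<^sup>2"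
      by (rule parallelogram_sq)
    moreover have "(norm (H i))\<^sup>2 < D + inverse (real (Suc i))" "(norm (H j))\<^sup>2 < D + inverse (real (Suc j))"
      using P(2) by (auto simp: H_def)
    ultimately show ?thesis by linarith
  qed
  have "Cauchy H"
  proof (rule CauchyI)
    fix r :: real assume r: "0 < r"
    obtain M where M: "inverse (real (Suc M)) < r\<^sup>2 / 4"
      using reals_Archimedean[of "r\<^sup>2/4"] r by auto
    have "norm (H i - H j) < r" if "i \<ge> M" "j \<ge> M" for i j
    proof -
      have "inverse (real (Suc i)) \<le> inverse (real (Suc M))" "inverse (real (Suc j)) \<le> inverse (real (Suc M))"
        using that by (auto simp: field_simps)
      hence "(norm (H i - H j))\<^sup>2 < r\<^sup>2" using Hd[of i j] M by linarith
      thus ?thesis using r by (smt (verit) norm_ge_zero power_mono)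
    qed
    thus "\<exists>M. \<forall>m\<ge>M. \<forall>n\<ge>M. norm (H m - H n) < r" by blast
  qed
  then obtain h where Hh: "H \<longlonglongrightarrow> h" using Cauchy_convergent_iff convergent_def by blast
  have nD: "(\<lambda>i. (norm (H i))\<^sup>2) \<longlonglongrightarrow> D"
  proof (rule tendsto_sandwich[where f="\<lambda>i. D" and h="\<lambda>i. D + inverse (real (Suc i))"])
    show "\<forall>\<^sub>F i in sequentially. D \<le> (norm (H i))\<^sup>2" using HD by auto
    show "\<forall>\<^sub>F i in sequentially. (norm (H i))\<^sup>2 \<le> D + inverse (real (Suc i))"
      using P(2) by (auto simp: H_def less_imp_le)
  qed (use LIMSEQ_inverse_real_of_nat_add[of D] in auto)
  have "(\<lambda>i. (norm (H i))\<^sup>2) \<longlonglongrightarrow> (norm h)\<^sup>2" by (intro tendsto_intros Hh)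
  hence hD: "(norm h)\<^sup>2 = D" using nD LIMSEQ_unique by blast
  have orth: "inner h q = 0" if q: "q \<in> S" for q
  proof (rule quad_nonneg_zero[where Q="(norm q)\<^sup>2"])
    fix t :: real
    have "D \<le> (norm (h + t *\<^sub>R q))\<^sup>2"
    proof (rule LIMSEQ_le_const)
      show "(\<lambda>i. (norm (H i + t *\<^sub>R q))\<^sup>2) \<longlonglongrightarrow> (norm (h + t *\<^sub>R q))\<^sup>2"
        by (intro tendsto_intros Hh)
      have "D \<le> (norm (H i + t *\<^sub>R q))\<^sup>2" for i
      proof -
        have "P i + (- t) *\<^sub>R q \<in> S" using add[OF P(1) sc[OF q]] .
        from Dle[OF this] show ?thesis by (simp add: H_def algebra_simps)
      qed
      thus "\<exists>N. \<forall>n\<ge>N. D \<le> (norm (H n + t *\<^sub>R q))\<^sup>2" by blast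
    qed
    thus "0 \<le> 2 * t * inner h q + t\<^sup>2 * (norm q)\<^sup>2"
      using hD norm_add_scale_sq[of h t q] by linarith
  qed simp
  have "inner h w = D"
  proof -
    have eq: "inner h w = inner h (H i)" for i
      using orth[OF P(1)[of i]] by (simp add: H_def inner_diff_right)
    have "(\<lambda>i. inner h (H i)) \<longlonglongrightarrow> inner h h" by (intro tendsto_intros Hh)
    hence "(\<lambda>i. inner h w) \<longlonglongrightarrow> inner h h" using eq by simp
    hence "inner h w = inner h h" using LIMSEQ_const_iff by blast
    thus ?thesis using hD by (simp add: power2_norm_eq_inner)
  qed
  moreover have "D > 0" using De e by (smt (verit) zero_less_power)
  ultimately show ?thesis using orth by (intro exI[of _ h]) auto
qed




definition Wt :: "(nat \<Rightarrow> 'a::real_normed_vector) \<Rightarrow> nat \<Rightarrow> real" where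
  "Wt a K = (\<Sum>k. if K \<le> k then (norm (a k))\<^sup>2 else 0)"

lemma shift_tail:
  fixes \<phi> :: "nat \<Rightarrow> real"
  assumes "summable \<phi>"
  shows "(\<Sum>i. if M \<le> i then \<phi> i else 0) = (\<Sum>i. \<phi> (i + M))"
proof -
  have s: "summable (\<lambda>i. if M \<le> i then \<phi> i else 0)"
  proof -
    have "summable (\<lambda>i. (\<lambda>i. if M \<le> i then \<phi> i else 0) (i + M))" using assms by simp
    thus ?thesis by (rule summable_iff_shift[THEN iffD1])
  qed
  show ?thesis using suminf_split_initial_segment[OF s, of M] by simp
qed

context
  fixes n :: "nat \<Rightarrow> nat" and d :: real and f a :: "nat \<Rightarrow> 'a::real_inner"
  assumes d1: "d > 1" and n0: "n 0 \<ge> 1" and lac: "\<forall>k. real (n (Suc k)) \<ge> d * real (n k)"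
    and fa: "\<forall>k. f (n k) = a k" and f0: "\<forall>j. j \<notin> range n \<longrightarrow> f j = 0" and fH: "f \<in> H2"
begin

lemma n_pos: "1 \<le> real (n k)"
proof (induction k)
  case 0 thus ?case using n0 by simp
next
  case (Suc k)
  have "real (n k) \<le> d * real (n k)" using Suc d1 by (simp add: mult_le_cancel_right1)
  thus ?case using Suc lac by (meson order_trans)
qed

lemma n_smono: "strict_mono n"
  unfolding strict_mono_Suc_iff
proof
  fix k
  have "real (n k) < d * real (n k)" using n_pos[of k] d1 by simp
  thus "n k < n (Suc k)" using lac by (smt (verit) of_nat_less_iff)
qed

lemma n_pow: "d ^ q * real (n k) \<le> real (n (k + q))"
proof (induction q)
  case 0 thus ?case by simp
next
  case (Suc q)
  have "d ^ Suc q * real (n k) = d * (d ^ q * real (n k))" by simp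
  also have "\<dots> \<le> d * real (n (k + q))" using Suc d1 by simp
  also have "\<dots> \<le> real (n (Suc (k + q)))" using lac by blast
  finally show ?case by simp
qed

lemma n_ge: "k \<le> n k" by (rule seq_suble[OF n_smono])

lemma n_lt_d: assumes "k < j" shows "d * real (n k) \<le> real (n j)"
proof -
  have "d ^ 1 \<le> d ^ (j - k)" using assms d1 by (intro power_increasing) auto
  hence "d * real (n k) \<le> d ^ (j - k) * real (n k)" using n_pos[of k] by simp
  also have "\<dots> \<le> real (n (k + (j - k)))" by (rule n_pow)
  finally show ?thesis using assms by simp
qed

lemma rep_gap:
  assumes "n k + t = n j" "0 < t"
  shows "(d - 1) * real k \<le> real t"
proof -
  have "n k < n j" using assms by simp
  hence "k < j" using n_smono by (simp add: strict_mono_less)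
  hence "d * real (n k) \<le> real (n j)" by (rule n_lt_d)
  hence "(d - 1) * real (n k) \<le> real t" using assms(1) by (simp add: algebra_simps)
  moreover have "(d - 1) * real k \<le> (d - 1) * real (n k)" using n_ge[of k] d1 by simp
  ultimately show ?thesis by linarith
qed

lemma rep_count:
  assumes C: "d / (d - 1) < d ^ C" and t: "0 < t"
  shows "finite {k. n k + t \<in> range n} \<and> card {k. n k + t \<in> range n} \<le> C"
proof -
  define Kt where "Kt = {k. n k + t \<in> range n}"
  define Jt where "Jt = {j. t \<le> n j \<and> real (n j) * (d - 1) \<le> d * real t}"
  have sub: "(\<lambda>k. n k + t) ` Kt \<subseteq> n ` Jt"
  proof
    fix y assume "y \<in> (\<lambda>k. n k + t) ` Kt"
    then obtain k j where kj: "y = n k + t" "n k + t = n j" by (auto simp: Kt_def)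
    have "n k < n j" using kj t by simp
    hence "k < j" using n_smono by (simp add: strict_mono_less)
    hence "d * real (n k) \<le> real (n j)" by (rule n_lt_d)
    have eq: "real (n j) = real (n k) + real t" using kj(2) by (metis of_nat_add)
    have e1: "real (n j) * (d - 1) = d * real (n j) - real (n j)" by (simp add: algebra_simps)
    have e2: "d * real t = d * real (n j) - d * real (n k)" using eq by (simp add: algebra_simps)
    have "real (n j) * (d - 1) \<le> d * real t" using e1 e2 eq \<open>d * real (n k) \<le> real (n j)\<close> by linarith
    moreover have "t \<le> n j" using kj by simp
    ultimately have "j \<in> Jt" by (simp add: Jt_def)
    thus "y \<in> n ` Jt" using kj by auto
  qed
  have JtC: "finite Jt \<and> card Jt \<le> C"
  proof (cases "Jt = {}")
    case True thus ?thesis by simp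
  next
    case False
    define j0 where "j0 = (LEAST j. j \<in> Jt)"
    have j0: "j0 \<in> Jt" using False unfolding j0_def by (metis LeastI ex_in_conv)
    have "Jt \<subseteq> {j0..<j0 + C}"
    proof
      fix j assume j: "j \<in> Jt"
      have "j0 \<le> j" using j unfolding j0_def by (rule Least_le)
      moreover have "j < j0 + C"
      proof (rule ccontr)
        assume "\<not> j < j0 + C"
        hence jj: "j0 + C \<le> j" by simp
        have "d ^ C \<le> d ^ (j - j0)" using jj d1 by (intro power_increasing) auto
        have tp: "real t > 0" using t by simp
        have "d ^ C * real t \<le> d ^ C * real (n j0)" using j0 d1 by (auto simp: Jt_def)
        also have "\<dots> \<le> d ^ (j - j0) * real (n j0)"
          using \<open>d ^ C \<le> d ^ (j - j0)\<close> n_pos[of j0] by simp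
        also have "\<dots> \<le> real (n (j0 + (j - j0)))" by (rule n_pow)
        also have "j0 + (j - j0) = j" using jj by simp
        finally have A: "d ^ C * real t \<le> real (n j)" .
        have "d / (d - 1) * real t < d ^ C * real t" by (rule mult_strict_right_mono[OF C tp])
        moreover have "real (n j) \<le> d / (d - 1) * real t"
        proof -
          have "real (n j) * (d - 1) \<le> d * real t" using j by (simp add: Jt_def)
          hence "real (n j) \<le> d * real t / (d - 1)" using d1 by (simp add: pos_le_divide_eq)
          thus ?thesis by simp
        qed
        ultimately show False using A by linarith
      qed
      ultimately show "j \<in> {j0..<j0 + C}" by simp
    qed
    hence "finite Jt" "card Jt \<le> card {j0..<j0 + C}"
      using finite_subset card_mono[of "{j0..<j0 + C}" Jt] by auto
    thus ?thesis by simp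
  qed
  have inj: "inj_on (\<lambda>k. n k + t) Kt"
    using n_smono by (auto simp: inj_on_def strict_mono_eq)
  have fin: "finite ((\<lambda>k. n k + t) ` Kt)" using sub JtC finite_subset by blast
  hence finK: "finite Kt" using inj finite_imageD by blast
  have "card Kt = card ((\<lambda>k. n k + t) ` Kt)" using inj by (simp add: card_image)
  also have "\<dots> \<le> card (n ` Jt)" using sub JtC by (intro card_mono) auto
  also have "\<dots> \<le> card Jt" using card_image_le JtC by blast
  finally show ?thesis using JtC finK by (simp add: Kt_def)
qed

lemma a_sums: "(\<lambda>l. (norm (f l))\<^sup>2) sums s \<longleftrightarrow> (\<lambda>k. (norm (a k))\<^sup>2) sums s"
proof -
  have z: "\<And>l. l \<notin> range n \<Longrightarrow> (norm (f l))\<^sup>2 = 0" using f0 by simp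
  have e: "(\<lambda>k. (norm (f (n k)))\<^sup>2) = (\<lambda>k. (norm (a k))\<^sup>2)" using fa by simp
  show ?thesis using sums_mono_reindex[where g=n and f="\<lambda>l. (norm (f l))\<^sup>2" and c=s, OF n_smono z] unfolding e by simp
qed

lemma a_summable: "summable (\<lambda>k. (norm (a k))\<^sup>2)"
proof -
  have "summable (\<lambda>l. (norm (f l))\<^sup>2)" using fH by (simp add: H2_def)
  then obtain s where "(\<lambda>l. (norm (f l))\<^sup>2) sums s" by (auto simp: summable_def)
  hence "(\<lambda>k. (norm (a k))\<^sup>2) sums s" using a_sums by blast
  thus ?thesis by (auto simp: summable_def)
qed

lemma W_summable: "summable (\<lambda>k. if K \<le> k then (norm (a k))\<^sup>2 else 0)"
  by (rule summable_comparison_test'[OF a_summable]) auto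

lemma W_eq: "Wt a K = (\<Sum>l. if n K \<le> l then (norm (f l))\<^sup>2 else 0)"
proof -
  let ?F = "\<lambda>l. if n K \<le> l then (norm (f l))\<^sup>2 else 0"
  have sF: "summable ?F"
  proof (rule summable_comparison_test')
    show "summable (\<lambda>l. (norm (f l))\<^sup>2)" using fH by (simp add: H2_def)
    show "norm (?F l) \<le> (norm (f l))\<^sup>2" for l by simp
  qed
  have s1: "?F sums suminf ?F" using sF by (rule summable_sums)
  have z: "?F l = 0" if "l \<notin> range n" for l
  proof -
    have "f l = 0" using f0 that by blast
    thus ?thesis by simp
  qed
  have s2: "(\<lambda>k. ?F (n k)) sums suminf ?F"
    using sums_mono_reindex[where g=n and f="?F" and c="suminf ?F", OF n_smono z] s1 by blast
  have e: "(\<lambda>k. ?F (n k)) = (\<lambda>k. if K \<le> k then (norm (a k))\<^sup>2 else 0)"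
  proof
    fix k
    have "(n K \<le> n k) = (K \<le> k)" using n_smono by (simp add: strict_mono_less_eq)
    thus "?F (n k) = (if K \<le> k then (norm (a k))\<^sup>2 else 0)" using fa by simp
  qed
  have "(\<lambda>k. if K \<le> k then (norm (a k))\<^sup>2 else 0) sums suminf ?F" using s2 unfolding e .
  thus ?thesis unfolding Wt_def by (rule sums_unique[symmetric])
qed

lemma W_pos: assumes "a K \<noteq> 0" shows "0 < Wt a K"
proof -
  have A: "(\<Sum>k\<in>{K}. if K \<le> k then (norm (a k))\<^sup>2 else 0) \<le> Wt a K"
    unfolding Wt_def by (rule sum_le_suminf[OF W_summable]) auto
  have B: "(\<Sum>k\<in>{K}. if K \<le> k then (norm (a k))\<^sup>2 else 0) = (norm (a K))\<^sup>2" by simp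
  have p: "0 < (norm (a K))\<^sup>2" using assms by simp
  show ?thesis using A B p by linarith
qed

lemma W_nonneg: "0 \<le> Wt a K"
  unfolding Wt_def by (rule suminf_nonneg[OF W_summable]) auto

lemma core_bound:
  fixes h :: "nat \<Rightarrow> 'a"
  assumes C: "d / (d - 1) < d ^ C" and hH: "h \<in> H2"
    and orth: "\<forall>p\<ge>N. (\<Sum>i. inner (h i) (f (i + p))) = 0"
  shows "\<exists>K0. \<forall>K\<ge>K0. \<forall>L. (\<Sum>k<L. if K \<le> k then (inner (a k) (h m))\<^sup>2 else 0)
              \<le> Wt a K * (real C * (\<Sum>i. (norm (h (i + (m + nat \<lceil>(d - 1) * real K\<rceil>))))\<^sup>2))"
proof -
  obtain M where M: "real m / (d - 1) < real M" using reals_Archimedean2 by blast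
  have Mm: "real m < (d - 1) * real M" using M d1 by (simp add: pos_divide_less_eq mult.commute)
  define K0 where "K0 = M + 1 + N + m"
  have hs: "summable (\<lambda>i. (norm (h i))\<^sup>2)" using hH by (simp add: H2_def)
  define S where "S k = (\<Sum>i. if m < i \<and> n k + (i - m) \<in> range n then (norm (h i))\<^sup>2 else 0)" for k
  have Sterm_s: "summable (\<lambda>i. if m < i \<and> n k + (i - m) \<in> range n then (norm (h i))\<^sup>2 else 0)" for k
    by (rule summable_comparison_test'[OF hs]) auto
  have S_nonneg: "0 \<le> S k" for k unfolding S_def by (rule suminf_nonneg[OF Sterm_s]) auto
  have step1: "(inner (a k) (h m))\<^sup>2 \<le> Wt a K * S k" if kK: "K \<le> k" and K0: "K0 \<le> K" for K k
  proof -
    have kge: "K0 \<le> k" using kK K0 by simp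
    have k1: "1 \<le> k" "N + m \<le> k" using kge by (auto simp: K0_def)
    have km: "M \<le> k - 1" using kge by (simp add: K0_def)
    have "(d - 1) * real M \<le> (d - 1) * real (k - 1)" using km d1 by simp
    hence k3: "real m < (d - 1) * real (k - 1)" using Mm by linarith
    have nk: "N + m \<le> n k" using k1 n_ge[of k] by simp
    have kk: "Suc (k - 1) = k" using k1 by simp
    have "d * real (n (k - 1)) \<le> real (n k)" using lac kk by metis
    moreover have "(d - 1) * real (k - 1) \<le> (d - 1) * real (n (k - 1))" using n_ge[of "k - 1"] d1 by simp
    moreover have "(d - 1) * real (n (k - 1)) = d * real (n (k - 1)) - real (n (k - 1))"
      by (simp add: algebra_simps)
    ultimately have "real (n (k - 1)) + real m < real (n k)" using k3 by linarith
    hence gap: "n (k - 1) + m < n k" by linarith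
    define p where "p = n k - m"
    have pN: "N \<le> p" using nk by (simp add: p_def)
    define g where "g i = inner (h i) (f (i + p))" for i
    have fpH: "(\<lambda>i. f (i + p)) \<in> H2"
      using fH summable_iff_shift[of "\<lambda>l. (norm (f l))\<^sup>2" p] by (simp add: H2_def)
    have gs: "summable g" unfolding g_def by (rule H2_inner_summable[OF hH fpH])
    have g0: "g i = 0" if "i < m" for i
    proof -
      have "i + p \<notin> range n"
      proof
        assume "i + p \<in> range n"
        then obtain j where j: "n j = i + p" by auto
        have "n (k - 1) < n j" using j gap that by (simp add: p_def)
        moreover have "n j < n k" using j that nk by (simp add: p_def)
        ultimately have "k - 1 < j" "j < k" using n_smono by (auto simp: strict_mono_less)
        thus False by simp
      qed
      hence "f (i + p) = 0" using f0 by blast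
      thus ?thesis by (simp add: g_def)
    qed
    have gm: "g m = inner (h m) (a k)" using fa nk by (simp add: g_def p_def)
    define g' where "g' i = (if m < i then g i else 0)" for i
    have g'eq: "g' = (\<lambda>i. g i - (if i = m then g i else 0))"
    proof
      fix i show "g' i = g i - (if i = m then g i else 0)"
        using g0[of i] by (cases "i < m"; cases "i = m") (auto simp: g'_def)
    qed
    have "(\<lambda>i. g i - (if i = m then g i else 0)) sums (suminf g - g m)"
      by (intro sums_diff summable_sums[OF gs] sums_single)
    moreover have "suminf g = 0" unfolding g_def using orth pN by blast
    ultimately have g'sums: "g' sums (- g m)" unfolding g'eq by simp
    define X where "X i = (if m < i \<and> f (i + p) \<noteq> 0 then norm (h i) else 0)" for i
    define Y where "Y i = (if m < i then norm (f (i + p)) else 0)" for i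
    have XH: "X \<in> H2" unfolding H2_def
      by (simp, rule summable_comparison_test'[OF hs]) (auto simp: X_def)
    have fps: "summable (\<lambda>i. (norm (f (i + p)))\<^sup>2)" using fpH by (simp add: H2_def)
    have YH: "Y \<in> H2" unfolding H2_def
      by (simp, rule summable_comparison_test'[OF fps]) (auto simp: Y_def)
    have XYs: "summable (\<lambda>i. X i * Y i)"
      using H2_inner_summable[OF XH YH] by (simp add: inner_real_def)
    have g'le: "\<bar>g' i\<bar> \<le> X i * Y i" for i
    proof (cases "m < i \<and> f (i + p) \<noteq> 0")
      case True thus ?thesis by (simp add: g'_def g_def X_def Y_def Cauchy_Schwarz_ineq2)
    next
      case False thus ?thesis by (auto simp: g'_def g_def X_def Y_def)
    qed
    have absg's: "summable (\<lambda>i. \<bar>g' i\<bar>)"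
      by (rule summable_comparison_test'[OF XYs]) (use g'le in auto)
    have "\<bar>g m\<bar> = \<bar>suminf g'\<bar>" using g'sums sums_unique by fastforce
    also have "\<dots> \<le> (\<Sum>i. \<bar>g' i\<bar>)" by (rule summable_rabs[OF absg's])
    also have "\<dots> \<le> (\<Sum>i. X i * Y i)" by (rule suminf_le[OF g'le absg's XYs])
    finally have gXY: "\<bar>g m\<bar> \<le> (\<Sum>i. X i * Y i)" .
    have CS: "(\<Sum>i. X i * Y i)\<^sup>2 \<le> (\<Sum>i. (X i)\<^sup>2) * (\<Sum>i. (Y i)\<^sup>2)"
    proof -
      have ip: "inner (mk X) (mk Y) = (\<Sum>i. X i * Y i)"
        by (simp add: inner_l2_vec vec_mk[OF XH] vec_mk[OF YH] inner_real_def)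
      have nX: "(norm (mk X))\<^sup>2 = (\<Sum>i. (X i)\<^sup>2)" by (simp add: norm_l2_sq vec_mk[OF XH])
      have nY: "(norm (mk Y))\<^sup>2 = (\<Sum>i. (Y i)\<^sup>2)" by (simp add: norm_l2_sq vec_mk[OF YH])
      have "\<bar>inner (mk X) (mk Y)\<bar> \<le> norm (mk X) * norm (mk Y)" by (rule Cauchy_Schwarz_ineq2)
      hence "\<bar>inner (mk X) (mk Y)\<bar>\<^sup>2 \<le> (norm (mk X) * norm (mk Y))\<^sup>2"
        by (intro power_mono) auto
      thus ?thesis using ip nX nY by (simp add: power_mult_distrib)
    qed
    have SX: "(\<Sum>i. (X i)\<^sup>2) \<le> S k" unfolding S_def
    proof (rule suminf_le[OF _ _ Sterm_s])
      show "summable (\<lambda>i. (X i)\<^sup>2)" using XH by (simp add: H2_def)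
      fix i
      show "(X i)\<^sup>2 \<le> (if m < i \<and> n k + (i - m) \<in> range n then (norm (h i))\<^sup>2 else 0)"
      proof (cases "m < i \<and> f (i + p) \<noteq> 0")
        case True
        hence "i + p \<in> range n" using f0 by blast
        moreover have "i + p = n k + (i - m)" using True nk by (simp add: p_def)
        ultimately show ?thesis using True by (simp add: X_def)
      next
        case False thus ?thesis by (auto simp: X_def)
      qed
    qed
    define Fk where "Fk l = (if n K \<le> l then (norm (f l))\<^sup>2 else 0)" for l
    have Fks: "summable Fk" unfolding Fk_def
      by (rule summable_comparison_test'[where g="\<lambda>l. (norm (f l))\<^sup>2"]) (use fH in \<open>auto simp: H2_def\<close>)
    have SY: "(\<Sum>i. (Y i)\<^sup>2) \<le> Wt a K"
    proof -
      have "(\<Sum>i. (Y i)\<^sup>2) \<le> (\<Sum>i. Fk (i + p))"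
      proof (rule suminf_le)
        show "summable (\<lambda>i. (Y i)\<^sup>2)" using YH by (simp add: H2_def)
        show "summable (\<lambda>i. Fk (i + p))" using Fks summable_iff_shift[of Fk p] by simp
        fix i
        have "n K \<le> n k" using kK n_smono by (simp add: strict_mono_less_eq)
        thus "(Y i)\<^sup>2 \<le> Fk (i + p)" using nk by (auto simp: Y_def Fk_def p_def)
      qed
      also have "\<dots> \<le> suminf Fk"
      proof -
        have "suminf Fk = (\<Sum>i. Fk (i + p)) + (\<Sum>i<p. Fk i)" by (rule suminf_split_initial_segment[OF Fks])
        moreover have "0 \<le> (\<Sum>i<p. Fk i)" by (intro sum_nonneg) (auto simp: Fk_def)
        ultimately show ?thesis by linarith
      qed
      also have "\<dots> = Wt a K"
      proof -
        have "Fk = (\<lambda>l. if n K \<le> l then (norm (f l))\<^sup>2 else 0)" by (rule ext) (simp add: Fk_def)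
        thus ?thesis using W_eq[of K] by simp
      qed
      finally show ?thesis .
    qed
    have Y0: "0 \<le> (\<Sum>i. (Y i)\<^sup>2)"
      by (rule suminf_nonneg) (use YH in \<open>auto simp: H2_def\<close>)
    have "(inner (a k) (h m))\<^sup>2 = \<bar>g m\<bar>\<^sup>2" using gm by (simp add: inner_commute)
    also have "\<dots> \<le> (\<Sum>i. X i * Y i)\<^sup>2" using gXY by (intro power_mono) auto
    also have "\<dots> \<le> (\<Sum>i. (X i)\<^sup>2) * (\<Sum>i. (Y i)\<^sup>2)" by (rule CS)
    also have "\<dots> \<le> S k * Wt a K" by (rule mult_mono[OF SX SY S_nonneg Y0])
    finally show ?thesis by (simp add: mult.commute)
  qed
  have step2: "(\<Sum>k<L. if K \<le> k then S k else 0)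
      \<le> real C * (\<Sum>i. (norm (h (i + (m + nat \<lceil>(d - 1) * real K\<rceil>))))\<^sup>2)" for K L
  proof -
    define G where "G = m + nat \<lceil>(d - 1) * real K\<rceil>"
    define Sp where "Sp k i = (if K \<le> k \<and> m < i \<and> n k + (i - m) \<in> range n then (norm (h i))\<^sup>2 else 0)" for k i
    have Sps: "summable (Sp k)" for k unfolding Sp_def
      by (rule summable_comparison_test'[OF hs]) auto
    have e1: "(if K \<le> k then S k else 0) = suminf (Sp k)" for k
    proof (cases "K \<le> k")
      case True
      hence "Sp k = (\<lambda>i. if m < i \<and> n k + (i - m) \<in> range n then (norm (h i))\<^sup>2 else 0)"
        by (simp add: fun_eq_iff Sp_def)
      thus ?thesis using True by (simp add: S_def)
    next
      case False
      hence "Sp k = (\<lambda>i. 0)" by (simp add: fun_eq_iff Sp_def)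
      thus ?thesis using False by simp
    qed
    have "(\<Sum>k<L. if K \<le> k then S k else 0) = (\<Sum>k<L. suminf (Sp k))" using e1 by simp
    also have "\<dots> = (\<Sum>i. \<Sum>k<L. Sp k i)" by (rule suminf_sum[symmetric]) (use Sps in auto)
    also have "\<dots> \<le> (\<Sum>i. if G \<le> i then real C * (norm (h i))\<^sup>2 else 0)"
    proof (rule suminf_le)
      show "summable (\<lambda>i. \<Sum>k<L. Sp k i)" by (rule summable_sum) (use Sps in auto)
      show "summable (\<lambda>i. if G \<le> i then real C * (norm (h i))\<^sup>2 else 0)"
        by (rule summable_comparison_test'[where g="\<lambda>i. real C * (norm (h i))\<^sup>2"])
          (use hs in \<open>auto intro: summable_mult\<close>)
      fix i
      define A where "A = {k \<in> {..<L}. K \<le> k \<and> m < i \<and> n k + (i - m) \<in> range n}"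
      have "(\<Sum>k<L. Sp k i) = (\<Sum>k<L. if k \<in> A then (norm (h i))\<^sup>2 else 0)"
        by (rule sum.cong) (auto simp: Sp_def A_def)
      also have "\<dots> = (\<Sum>k\<in>{..<L} \<inter> A. (norm (h i))\<^sup>2)" by (rule sum.inter_restrict[symmetric]) simp
      also have "\<dots> = (\<Sum>k\<in>A. (norm (h i))\<^sup>2)"
      proof -
        have "{..<L} \<inter> A = A" by (auto simp: A_def)
        thus ?thesis by simp
      qed
      also have "\<dots> = real (card A) * (norm (h i))\<^sup>2" by simp
      also have "\<dots> \<le> (if G \<le> i then real C * (norm (h i))\<^sup>2 else 0)"
      proof (cases "A = {}")
        case True thus ?thesis by simp
      next
        case False
        then obtain k where k: "k \<in> A" by auto
        hence mi: "m < i" and kK: "K \<le> k" and kr: "n k + (i - m) \<in> range n" by (auto simp: A_def)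
        obtain j where j: "n k + (i - m) = n j" using kr by auto
        have "(d - 1) * real k \<le> real (i - m)" by (rule rep_gap[OF j]) (use mi in simp)
        moreover have "(d - 1) * real K \<le> (d - 1) * real k" using kK d1 by simp
        ultimately have "(d - 1) * real K \<le> real (i - m)" by linarith
        hence "\<lceil>(d - 1) * real K\<rceil> \<le> int (i - m)" by (simp add: ceiling_le_iff)
        hence Gi: "G \<le> i" using mi by (simp add: G_def)
        have rc: "finite {k. n k + (i - m) \<in> range n} \<and> card {k. n k + (i - m) \<in> range n} \<le> C"
          by (rule rep_count[OF C]) (use mi in simp)
        have "A \<subseteq> {k. n k + (i - m) \<in> range n}" by (auto simp: A_def)
        hence "card A \<le> C" using rc card_mono[of "{k. n k + (i - m) \<in> range n}" A] by linarith
        hence "real (card A) * (norm (h i))\<^sup>2 \<le> real C * (norm (h i))\<^sup>2"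
          by (intro mult_right_mono) auto
        thus ?thesis using Gi by simp
      qed
      finally show "(\<Sum>k<L. Sp k i) \<le> (if G \<le> i then real C * (norm (h i))\<^sup>2 else 0)" .
    qed
    also have "\<dots> = real C * (\<Sum>i. if G \<le> i then (norm (h i))\<^sup>2 else 0)"
    proof -
      have s: "summable (\<lambda>i. if G \<le> i then (norm (h i))\<^sup>2 else 0)"
        by (rule summable_comparison_test'[OF hs]) auto
      have "(\<lambda>i. if G \<le> i then real C * (norm (h i))\<^sup>2 else 0) = (\<lambda>i. real C * (if G \<le> i then (norm (h i))\<^sup>2 else 0))"
        by auto
      thus ?thesis using suminf_mult[OF s, of "real C"] by simp
    qed
    also have "\<dots> = real C * (\<Sum>i. (norm (h (i + G)))\<^sup>2)"
      using shift_tail[OF hs, of G] by simp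
    finally show ?thesis by (simp add: G_def)
  qed
  have "\<forall>K\<ge>K0. \<forall>L. (\<Sum>k<L. if K \<le> k then (inner (a k) (h m))\<^sup>2 else 0)
              \<le> Wt a K * (real C * (\<Sum>i. (norm (h (i + (m + nat \<lceil>(d - 1) * real K\<rceil>))))\<^sup>2))"
  proof (intro allI impI)
    fix K L assume K0: "K0 \<le> K"
    have "(\<Sum>k<L. if K \<le> k then (inner (a k) (h m))\<^sup>2 else 0) \<le> (\<Sum>k<L. if K \<le> k then Wt a K * S k else 0)"
      by (rule sum_mono) (use step1 K0 in auto)
    also have "\<dots> = Wt a K * (\<Sum>k<L. if K \<le> k then S k else 0)"
      by (simp add: sum_distrib_left) (rule sum.cong, auto)
    also have "\<dots> \<le> Wt a K * (real C * (\<Sum>i. (norm (h (i + (m + nat \<lceil>(d - 1) * real K\<rceil>))))\<^sup>2))"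
      by (rule mult_left_mono[OF step2 W_nonneg])
    finally show "(\<Sum>k<L. if K \<le> k then (inner (a k) (h m))\<^sup>2 else 0)
              \<le> Wt a K * (real C * (\<Sum>i. (norm (h (i + (m + nat \<lceil>(d - 1) * real K\<rceil>))))\<^sup>2))" .
  qed
  thus ?thesis by blast
qed

lemma num_summable: "summable (\<lambda>k. if K \<le> k \<and> P k then (norm (a k))\<^sup>2 else 0)"
  by (rule summable_comparison_test'[OF a_summable]) auto

lemma choose_x:
  assumes anz: "\<forall>k. a k \<noteq> 0"
    and cpt: "compact (closure (range (\<lambda>k. (1 / norm (a k)) *\<^sub>R a k)))"
  shows "\<exists>x\<in>closure (range (\<lambda>k. (1 / norm (a k)) *\<^sub>R a k)). \<forall>r>0.
     \<not> ((\<lambda>K. (\<Sum>k. if K \<le> k \<and> (1 / norm (a k)) *\<^sub>R a k \<in> ball x r then (norm (a k))\<^sup>2 else 0) / Wt a K) \<longlonglongrightarrow> 0)"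
proof (rule ccontr)
  define u where "u k = (1 / norm (a k)) *\<^sub>R a k" for k
  define Cl where "Cl = closure (range u)"
  define mu where "mu K U = (\<Sum>k. if K \<le> k \<and> u k \<in> U then (norm (a k))\<^sup>2 else 0) / Wt a K" for K U
  assume "\<not> ?thesis"
  hence "\<forall>x\<in>Cl. \<exists>r>0. (\<lambda>K. mu K (ball x r)) \<longlonglongrightarrow> 0"
    by (simp add: u_def Cl_def mu_def[abs_def])
  then obtain R where R: "\<And>x. x \<in> Cl \<Longrightarrow> 0 < R x \<and> (\<lambda>K. mu K (ball x (R x))) \<longlonglongrightarrow> 0"
    by metis
  have cptC: "compact Cl" using cpt by (simp add: Cl_def u_def[abs_def])
  obtain F where F: "F \<subseteq> Cl" "finite F" "Cl \<subseteq> (\<Union>x\<in>F. ball x (R x))"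
  proof (rule compactE_image[OF cptC, where f="\<lambda>x. ball x (R x)" and C=Cl])
    show "\<And>x. x \<in> Cl \<Longrightarrow> open (ball x (R x))" by simp
    show "Cl \<subseteq> (\<Union>x\<in>Cl. ball x (R x))" using R by force
  qed blast
  have lim: "(\<lambda>K. \<Sum>x\<in>F. mu K (ball x (R x))) \<longlonglongrightarrow> 0"
    by (rule tendsto_null_sum) (use R F in blast)
  have ge1: "1 \<le> (\<Sum>x\<in>F. mu K (ball x (R x)))" for K
  proof -
    have Wp: "0 < Wt a K" using W_pos anz by blast
    have "Wt a K \<le> (\<Sum>k. \<Sum>x\<in>F. if K \<le> k \<and> u k \<in> ball x (R x) then (norm (a k))\<^sup>2 else 0)"
      unfolding Wt_def
    proof (rule suminf_le)
      show "summable (\<lambda>k. if K \<le> k then (norm (a k))\<^sup>2 else 0)" by (rule W_summable)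
      show "summable (\<lambda>k. \<Sum>x\<in>F. if K \<le> k \<and> u k \<in> ball x (R x) then (norm (a k))\<^sup>2 else 0)"
        by (rule summable_sum) (rule num_summable)
      fix k
      show "(if K \<le> k then (norm (a k))\<^sup>2 else 0) \<le> (\<Sum>x\<in>F. if K \<le> k \<and> u k \<in> ball x (R x) then (norm (a k))\<^sup>2 else 0)"
      proof (cases "K \<le> k")
        case True
        have "u k \<in> Cl" unfolding Cl_def by (rule closure_subset[THEN subsetD]) simp
        then obtain x where x: "x \<in> F" "u k \<in> ball x (R x)" using F by blast
        have "(if K \<le> k \<and> u k \<in> ball x (R x) then (norm (a k))\<^sup>2 else 0) \<le> (\<Sum>x\<in>F. if K \<le> k \<and> u k \<in> ball x (R x) then (norm (a k))\<^sup>2 else 0)"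
          by (rule member_le_sum) (use x F in auto)
        thus ?thesis using True x by simp
      next
        case False
        thus ?thesis by simp
      qed
    qed
    also have "\<dots> = (\<Sum>x\<in>F. \<Sum>k. if K \<le> k \<and> u k \<in> ball x (R x) then (norm (a k))\<^sup>2 else 0)"
      by (rule suminf_sum) (rule num_summable)
    finally have "Wt a K \<le> (\<Sum>x\<in>F. \<Sum>k. if K \<le> k \<and> u k \<in> ball x (R x) then (norm (a k))\<^sup>2 else 0)" .
    hence "1 \<le> (\<Sum>x\<in>F. \<Sum>k. if K \<le> k \<and> u k \<in> ball x (R x) then (norm (a k))\<^sup>2 else 0) / Wt a K"
      using Wp by simp
    also have "\<dots> = (\<Sum>x\<in>F. mu K (ball x (R x)))"
      by (simp add: mu_def sum_divide_distrib)
    finally show ?thesis .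
  qed
  have "1 \<le> (0::real)" by (rule LIMSEQ_le_const[OF lim]) (use ge1 in blast)
  thus False by simp
qed

lemma orth_x:
  fixes h :: "nat \<Rightarrow> 'a"
  assumes anz: "\<forall>k. a k \<noteq> 0" and C: "d / (d - 1) < d ^ C" and hH: "h \<in> H2"
    and orth: "\<forall>p\<ge>N. (\<Sum>i. inner (h i) (f (i + p))) = 0"
    and hx: "\<forall>r>0. \<not> ((\<lambda>K. (\<Sum>k. if K \<le> k \<and> (1 / norm (a k)) *\<^sub>R a k \<in> ball x r then (norm (a k))\<^sup>2 else 0) / Wt a K) \<longlonglongrightarrow> 0)"
  shows "inner (h m) x = 0"
proof (rule ccontr)
  define u where "u k = (1 / norm (a k)) *\<^sub>R a k" for k
  assume bne: "inner (h m) x \<noteq> 0"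
  define \<beta> where "\<beta> = inner (h m) x"
  have bp: "0 < \<bar>\<beta>\<bar>" using bne by (simp add: \<beta>_def)
  define r where "r = \<bar>\<beta>\<bar> / (2 * (norm (h m) + 1))"
  have np: "0 < 2 * (norm (h m) + 1)"
    by (rule mult_pos_pos) (simp_all add: add_nonneg_pos)
  have rp: "0 < r" unfolding r_def using bp np by (rule divide_pos_pos)
  have rb: "r * (norm (h m) + 1) = \<bar>\<beta>\<bar> / 2" unfolding r_def
    using np by (simp add: field_simps)
  have near: "\<bar>\<beta>\<bar> / 2 \<le> \<bar>inner y (h m)\<bar>" if y: "y \<in> ball x r" for y
  proof -
    have "inner y (h m) = \<beta> + inner (y - x) (h m)"
      by (simp add: \<beta>_def inner_diff_left inner_commute[of x "h m"])
    moreover have "\<bar>inner (y - x) (h m)\<bar> \<le> norm (y - x) * norm (h m)" by (rule Cauchy_Schwarz_ineq2)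
    moreover have "norm (y - x) < r" using y by (simp add: dist_norm norm_minus_commute)
    moreover have "norm (y - x) * norm (h m) \<le> r * norm (h m)"
      using \<open>norm (y - x) < r\<close> by (intro mult_right_mono) auto
    moreover have "r * norm (h m) \<le> r * (norm (h m) + 1)" using rp by simp
    ultimately show ?thesis using rb by linarith
  qed
  have big: "(norm (a k))\<^sup>2 * (\<bar>\<beta>\<bar> / 2)\<^sup>2 \<le> (inner (a k) (h m))\<^sup>2" if uk: "u k \<in> ball x r" for k
  proof -
    have ak: "a k = norm (a k) *\<^sub>R u k" using anz by (simp add: u_def)
    have "inner (a k) (h m) = norm (a k) * inner (u k) (h m)" by (subst ak) simp
    hence "(inner (a k) (h m))\<^sup>2 = (norm (a k))\<^sup>2 * (inner (u k) (h m))\<^sup>2" by (simp add: power_mult_distrib)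
    moreover have "(\<bar>\<beta>\<bar> / 2)\<^sup>2 \<le> (inner (u k) (h m))\<^sup>2"
    proof -
      have "(\<bar>\<beta>\<bar> / 2)\<^sup>2 \<le> \<bar>inner (u k) (h m)\<bar>\<^sup>2" using near[OF uk] bp by (intro power_mono) auto
      thus ?thesis by simp
    qed
    ultimately show ?thesis by (simp add: mult_left_mono)
  qed
  obtain K0 where K0: "\<forall>K\<ge>K0. \<forall>L. (\<Sum>k<L. if K \<le> k then (inner (a k) (h m))\<^sup>2 else 0)
              \<le> Wt a K * (real C * (\<Sum>i. (norm (h (i + (m + nat \<lceil>(d - 1) * real K\<rceil>))))\<^sup>2))"
    using core_bound[OF C hH orth] by blast
  define T where "T K = (\<Sum>i. (norm (h (i + (m + nat \<lceil>(d - 1) * real K\<rceil>))))\<^sup>2)" for K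
  define c where "c = 4 / \<beta>\<^sup>2 * real C"
  define mu where "mu K = (\<Sum>k. if K \<le> k \<and> u k \<in> ball x r then (norm (a k))\<^sup>2 else 0) / Wt a K" for K
  have hs: "summable (\<lambda>i. (norm (h i))\<^sup>2)" using hH by (simp add: H2_def)
  have mu_le: "mu K \<le> c * T K" if KK: "K \<ge> K0" for K
  proof -
    have Wp: "0 < Wt a K" using W_pos anz by blast
    have b2: "0 < (\<bar>\<beta>\<bar> / 2)\<^sup>2" using bp by simp
    have "(\<Sum>k. if K \<le> k \<and> u k \<in> ball x r then (norm (a k))\<^sup>2 else 0) \<le> Wt a K * (real C * T K) / (\<bar>\<beta>\<bar> / 2)\<^sup>2"
    proof (rule suminf_le_const)
      show "summable (\<lambda>k. if K \<le> k \<and> u k \<in> ball x r then (norm (a k))\<^sup>2 else 0)"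
        using num_summable[of K "\<lambda>k. u k \<in> ball x r"] by simp
      fix L
      have "(\<Sum>k<L. if K \<le> k \<and> u k \<in> ball x r then (norm (a k))\<^sup>2 else 0) * (\<bar>\<beta>\<bar> / 2)\<^sup>2
          = (\<Sum>k<L. if K \<le> k \<and> u k \<in> ball x r then (norm (a k))\<^sup>2 * (\<bar>\<beta>\<bar> / 2)\<^sup>2 else 0)"
        by (simp add: sum_distrib_right) (rule sum.cong, auto)
      also have "\<dots> \<le> (\<Sum>k<L. if K \<le> k then (inner (a k) (h m))\<^sup>2 else 0)"
        by (rule sum_mono) (use big in auto)
      also have "\<dots> \<le> Wt a K * (real C * T K)" using K0 KK by (simp add: T_def)
      finally show "(\<Sum>k<L. if K \<le> k \<and> u k \<in> ball x r then (norm (a k))\<^sup>2 else 0) \<le> Wt a K * (real C * T K) / (\<bar>\<beta>\<bar> / 2)\<^sup>2"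
        using b2 by (simp add: pos_le_divide_eq)
    qed
    hence "mu K \<le> Wt a K * (real C * T K) / (\<bar>\<beta>\<bar> / 2)\<^sup>2 / Wt a K"
      unfolding mu_def using Wp by (intro divide_right_mono) auto
    also have "\<dots> = c * T K" using Wp bp by (simp add: c_def field_simps power2_eq_square)
    finally show ?thesis .
  qed
  have mu_ge: "0 \<le> mu K" for K
  proof -
    have "0 \<le> (\<Sum>k. if K \<le> k \<and> u k \<in> ball x r then (norm (a k))\<^sup>2 else 0)"
      by (rule suminf_nonneg) (use num_summable[of K "\<lambda>k. u k \<in> ball x r"] in auto)
    thus ?thesis unfolding mu_def using W_nonneg by simp
  qed
  have T0: "T \<longlonglongrightarrow> 0"
  proof (rule LIMSEQ_I)
    fix e :: real assume e: "0 < e"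
    obtain N0 where N0: "\<forall>n\<ge>N0. norm (\<Sum>i. (norm (h (i + n)))\<^sup>2) < e"
      using suminf_exist_split[OF e hs] by blast
    obtain K1 where K1: "real N0 / (d - 1) < real K1" using reals_Archimedean2 by blast
    have "norm (T K - 0) < e" if "K \<ge> K1" for K
    proof -
      have "real N0 < (d - 1) * real K1" using K1 d1 by (simp add: pos_divide_less_eq mult.commute)
      also have "\<dots> \<le> (d - 1) * real K" using that d1 by simp
      finally have "real N0 \<le> (d - 1) * real K" by simp
      hence "int N0 \<le> \<lceil>(d - 1) * real K\<rceil>" by (simp add: le_ceiling_iff)
      hence "N0 \<le> m + nat \<lceil>(d - 1) * real K\<rceil>" by linarith
      thus ?thesis using N0 by (simp add: T_def)
    qed
    thus "\<exists>no. \<forall>n\<ge>no. norm (T n - 0) < e" by blast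
  qed
  have "(\<lambda>K. c * T K) \<longlonglongrightarrow> 0" using tendsto_mult_right_zero[OF T0, of c] by simp
  moreover have "eventually (\<lambda>K. 0 \<le> mu K) sequentially" using mu_ge by simp
  moreover have "eventually (\<lambda>K. mu K \<le> c * T K) sequentially"
    using mu_le by (auto simp: eventually_sequentially)
  ultimately have "mu \<longlonglongrightarrow> 0"
    using tendsto_sandwich[where f="\<lambda>K. 0" and g=mu and h="\<lambda>K. c * T K"] by auto
  moreover have "\<not> mu \<longlonglongrightarrow> 0" using hx rp by (simp add: mu_def[abs_def] u_def)
  ultimately show False by simp
qed

end



lemma l2_eqI: "vec x = vec y \<Longrightarrow> x = y" by (simp add: vec_inject)

lemma mk_add: "p \<in> H2 \<Longrightarrow> q \<in> H2 \<Longrightarrow> mk p + mk q = mk (\<lambda>j. p j + q j)"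
  by (rule l2_eqI) (simp add: fun_eq_iff vec_plus vec_mk H2_add)

lemma mk_scale: "p \<in> H2 \<Longrightarrow> c *\<^sub>R mk p = mk (\<lambda>j. c *\<^sub>R p j)"
  by (rule l2_eqI) (simp add: fun_eq_iff vec_scale vec_mk H2_scale)

lemma norm_mk_diff: "p \<in> H2 \<Longrightarrow> q \<in> H2 \<Longrightarrow> norm (mk p - mk q) = H2dist p q"
proof -
  assume p: "p \<in> H2" and q: "q \<in> H2"
  have "(norm (mk p - mk q))\<^sup>2 = (\<Sum>n. (norm (p n - q n))\<^sup>2)"
    by (simp add: norm_l2_sq vec_minus vec_mk p q)
  hence "norm (mk p - mk q) = sqrt (\<Sum>n. (norm (p n - q n))\<^sup>2)"
    by (metis norm_ge_zero real_sqrt_unique)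
  thus ?thesis by (simp add: H2dist_def)
qed

lemma inner_mk: "p \<in> H2 \<Longrightarrow> inner x (mk p) = (\<Sum>n. inner (vec x n) (p n))"
  by (simp add: inner_l2_vec vec_mk)

lemma bshift_pow: "(bshift ^^ q) g j = g (j + q)"
  by (induction q arbitrary: j) (simp_all add: bshift_def)

context
  fixes J :: "'a::real_inner \<Rightarrow> 'a"
  assumes cs: "complex_structure J"
begin

lemma J_add: "J (x + y) = J x + J y" and J_scale: "J (r *\<^sub>R x) = r *\<^sub>R J x"
  and J_J: "J (J x) = - x" and J_norm: "norm (J x) = norm x"
  using cs by (auto simp: complex_structure_def linear_iff)

lemma J_inner: "inner (J x) (J y) = inner x y"
proof -
  have "(norm (J (x + y)))\<^sup>2 = (norm (x + y))\<^sup>2" by (simp add: J_norm)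
  hence "inner (J x + J y) (J x + J y) = inner (x + y) (x + y)"
    by (simp add: J_add power2_norm_eq_inner)
  moreover have "inner (J x) (J x) = inner x x" "inner (J y) (J y) = inner y y"
    using J_norm[of x] J_norm[of y] by (simp_all add: power2_norm_eq_inner[symmetric])
  ultimately show ?thesis
    by (simp add: inner_add_left inner_add_right inner_commute)
qed

lemma J_skew: "inner (J x) y = - inner x (J y)"
proof -
  have "inner (J x) y = inner (J (J x)) (J y)" by (simp add: J_inner)
  thus ?thesis by (simp add: J_J)
qed

lemma J_orth: "inner x (J x) = 0"
  using J_skew[of x x] by (simp add: inner_commute)

lemma J_H2: "v \<in> H2 \<Longrightarrow> (\<lambda>j. J (v j)) \<in> H2"
  by (simp add: H2_def J_norm)

lemma cscale_H2: "v \<in> H2 \<Longrightarrow> (\<lambda>j. cscale J c (v j)) \<in> H2"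
  unfolding cscale_def by (intro H2_add H2_scale J_H2)

lemma cscale_add: "cscale J (c1 + c2) y = cscale J c1 y + cscale J c2 y"
  by (simp add: cscale_def scaleR_add_left)

lemma cscale_zero[simp]: "cscale J 0 y = 0" by (simp add: cscale_def)
lemma cscale_one: "cscale J 1 y = y" by (simp add: cscale_def)
lemma cscale_i: "cscale J \<i> y = J y" by (simp add: cscale_def)
lemma cscale_real: "cscale J (complex_of_real r * c) y = r *\<^sub>R cscale J c y"
  by (simp add: cscale_def scaleR_add_right)

lemma norm_cscale: "(norm (cscale J c x))\<^sup>2 = (cmod c)\<^sup>2 * (norm x)\<^sup>2"
proof -
  have "(norm (cscale J c x))\<^sup>2 = inner (Re c *\<^sub>R x + Im c *\<^sub>R J x) (Re c *\<^sub>R x + Im c *\<^sub>R J x)"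
    by (simp add: cscale_def power2_norm_eq_inner)
  also have "\<dots> = (Re c)\<^sup>2 * inner x x + (Im c)\<^sup>2 * inner (J x) (J x)"
    using J_orth[of x]
    by (simp add: inner_add_left inner_add_right inner_commute power2_eq_square algebra_simps)
  also have "\<dots> = (cmod c)\<^sup>2 * (norm x)\<^sup>2"
    by (simp add: J_inner cmod_power2 power2_norm_eq_inner algebra_simps)
  finally show ?thesis .
qed

lemma span_H2:
  assumes g: "g \<in> H2" and p: "p \<in> shift_span J g"
  shows "p \<in> H2"
proof -
  obtain c M where pe: "p = (\<lambda>j. \<Sum>n<M. cscale J (c n) ((bshift ^^ n) g j))"
    using p by (auto simp: shift_span_def)
  have sh: "(\<lambda>j. (bshift ^^ n) g j) \<in> H2" for n
    using g summable_iff_shift[of "\<lambda>l. (norm (g l))\<^sup>2" n] by (simp add: H2_def bshift_pow)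
  have "(\<lambda>j. \<Sum>n<M. cscale J (c n) ((bshift ^^ n) g j)) \<in> H2"
  proof (induction M)
    case 0 thus ?case using H2_zero by simp
  next
    case (Suc M)
    have "(\<lambda>j. (\<Sum>n<M. cscale J (c n) ((bshift ^^ n) g j)) + cscale J (c M) ((bshift ^^ M) g j)) \<in> H2"
      by (rule H2_add[OF Suc cscale_H2[OF sh]])
    thus ?case by simp
  qed
  thus ?thesis using pe by simp
qed

lemma span_add:
  assumes "p \<in> shift_span J g" "q \<in> shift_span J g"
  shows "(\<lambda>j. p j + q j) \<in> shift_span J g"
proof -
  obtain c1 M1 where p: "p = (\<lambda>j. \<Sum>n<M1. cscale J (c1 n) ((bshift ^^ n) g j))"
    using assms(1) by (auto simp: shift_span_def)
  obtain c2 M2 where q: "q = (\<lambda>j. \<Sum>n<M2. cscale J (c2 n) ((bshift ^^ n) g j))"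
    using assms(2) by (auto simp: shift_span_def)
  define M where "M = max M1 M2"
  define c where "c n = (if n < M1 then c1 n else 0) + (if n < M2 then c2 n else 0)" for n
  have ext1: "(\<Sum>n<M1. F n) = (\<Sum>n<M. if n < M1 then F n else 0)" for F :: "nat \<Rightarrow> 'a"
  proof -
    have "(\<Sum>n<M. if n < M1 then F n else 0) = (\<Sum>n<M. if n \<in> {..<M1} then F n else 0)" by simp
    also have "\<dots> = (\<Sum>n\<in>{..<M} \<inter> {..<M1}. F n)" by (rule sum.inter_restrict[symmetric]) simp
    also have "{..<M} \<inter> {..<M1} = {..<M1}" by (auto simp: M_def)
    finally show ?thesis by simp
  qed
  have ext2: "(\<Sum>n<M2. F n) = (\<Sum>n<M. if n < M2 then F n else 0)" for F :: "nat \<Rightarrow> 'a"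
  proof -
    have "(\<Sum>n<M. if n < M2 then F n else 0) = (\<Sum>n<M. if n \<in> {..<M2} then F n else 0)" by simp
    also have "\<dots> = (\<Sum>n\<in>{..<M} \<inter> {..<M2}. F n)" by (rule sum.inter_restrict[symmetric]) simp
    also have "{..<M} \<inter> {..<M2} = {..<M2}" by (auto simp: M_def)
    finally show ?thesis by simp
  qed
  have "(\<lambda>j. p j + q j) = (\<lambda>j. \<Sum>n<M. cscale J (c n) ((bshift ^^ n) g j))"
  proof
    fix j
    have "p j + q j = (\<Sum>n<M. if n < M1 then cscale J (c1 n) ((bshift ^^ n) g j) else 0)
        + (\<Sum>n<M. if n < M2 then cscale J (c2 n) ((bshift ^^ n) g j) else 0)"
      unfolding p q by (simp only: ext1 ext2)
    also have "\<dots> = (\<Sum>n<M. cscale J (c n) ((bshift ^^ n) g j))"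
      by (simp add: sum.distrib[symmetric] c_def cscale_add) (rule sum.cong, auto)
    finally show "p j + q j = (\<Sum>n<M. cscale J (c n) ((bshift ^^ n) g j))" .
  qed
  thus ?thesis by (auto simp: shift_span_def)
qed

lemma span_scale:
  assumes "p \<in> shift_span J g"
  shows "(\<lambda>j. r *\<^sub>R p j) \<in> shift_span J g"
proof -
  obtain c M where p: "p = (\<lambda>j. \<Sum>n<M. cscale J (c n) ((bshift ^^ n) g j))"
    using assms by (auto simp: shift_span_def)
  have "(\<lambda>j. r *\<^sub>R p j) = (\<lambda>j. \<Sum>n<M. cscale J (complex_of_real r * c n) ((bshift ^^ n) g j))"
    by (simp add: p cscale_real scaleR_sum_right)
  thus ?thesis by (auto simp: shift_span_def)
qed

lemma span_single: "(\<lambda>j. cscale J c ((bshift ^^ q) g j)) \<in> shift_span J g"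
proof -
  define cc where "cc n = (if n = q then c else 0)" for n
  have "(\<lambda>j. cscale J c ((bshift ^^ q) g j)) = (\<lambda>j. \<Sum>n<Suc q. cscale J (cc n) ((bshift ^^ n) g j))"
  proof
    fix j
    have "(\<Sum>n<Suc q. cscale J (cc n) ((bshift ^^ n) g j)) = (\<Sum>n\<in>{q}. cscale J (cc n) ((bshift ^^ n) g j))"
      by (rule sum.mono_neutral_right) (auto simp: cc_def)
    thus "cscale J c ((bshift ^^ q) g j) = (\<Sum>n<Suc q. cscale J (cc n) ((bshift ^^ n) g j))"
      by (simp add: cc_def)
  qed
  thus ?thesis unfolding shift_span_def mem_Collect_eq by blast
qed

lemma span_zero: "(\<lambda>j. 0) \<in> shift_span J g"
  unfolding shift_span_def by (rule CollectI, rule exI[of _ "\<lambda>n. 0"], rule exI[of _ 0]) simp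

end
theorem mainTheorem5:
  fixes J :: "'a::{real_inner, complete_space} \<Rightarrow> 'a"
    and f :: "nat \<Rightarrow> 'a" and a :: "nat \<Rightarrow> 'a"
    and n :: "nat \<Rightarrow> nat" and d :: real
  assumes "complex_structure J"
    and "separable_space TYPE('a)"
    and "d > 1" and "n 0 \<ge> 1" and "\<forall>k. real (n (Suc k)) \<ge> d * real (n k)"
    and "\<forall>k. f (n k) = a k" and "\<forall>j. j \<notin> range n \<longrightarrow> f j = 0"
    and "f \<in> H2"
    and "\<forall>k. a k \<noteq> 0"
    and "compact (closure (range (\<lambda>k. (1 / norm (a k)) *\<^sub>R a k)))"
  shows "\<exists>x. x \<noteq> 0 \<and> (\<forall>N. H2_tensor J x \<subseteq> Egen J ((bshift ^^ N) f))"
proof -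
  note cs = assms(1) and d1 = assms(3) and n0 = assms(4) and lac = assms(5)
    and fa = assms(6) and f0 = assms(7) and fH = assms(8) and anz = assms(9) and cpt = assms(10)
  obtain C where C: "d / (d - 1) < d ^ C" using real_arch_pow[OF d1] by blast
  obtain x where xC: "x \<in> closure (range (\<lambda>k. (1 / norm (a k)) *\<^sub>R a k))"
    and hx: "\<forall>r>0. \<not> ((\<lambda>K. (\<Sum>k. if K \<le> k \<and> (1 / norm (a k)) *\<^sub>R a k \<in> ball x r then (norm (a k))\<^sup>2 else 0) / Wt a K) \<longlonglongrightarrow> 0)"
    using choose_x[OF d1 n0 lac fa f0 fH anz cpt] by blast
  have "range (\<lambda>k. (1 / norm (a k)) *\<^sub>R a k) \<subseteq> sphere 0 1" using anz by auto
  hence "closure (range (\<lambda>k. (1 / norm (a k)) *\<^sub>R a k)) \<subseteq> sphere 0 1"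
  proof (rule closure_minimal)
    have "sphere (0::'a) 1 = cball 0 1 - ball 0 1" by auto
    thus "closed (sphere (0::'a) 1)" by (simp add: closed_Diff)
  qed
  hence nx: "norm x = 1" using xC by auto
  have "H2_tensor J x \<subseteq> Egen J ((bshift ^^ N) f)" for N
  proof
    fix w assume "w \<in> H2_tensor J x"
    then obtain c where w: "w = (\<lambda>n. cscale J (c n) x)" and cs2: "summable (\<lambda>n. (cmod (c n))\<^sup>2)"
      by (auto simp: H2_tensor_def)
    define g where "g = (bshift ^^ N) f"
    have gH: "g \<in> H2" using fH summable_iff_shift[of "\<lambda>l. (norm (f l))\<^sup>2" N]
      by (simp add: H2_def g_def bshift_pow[abs_def])
    have wH: "w \<in> H2" using cs2 by (simp add: H2_def w norm_cscale[OF cs] nx)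
    show "w \<in> Egen J g"
    proof (rule ccontr)
      assume "w \<notin> Egen J g"
      then obtain e where e: "0 < e" and far0: "\<forall>p\<in>shift_span J g. e \<le> H2dist w p"
        using wH by (auto simp: Egen_def not_less)
      define S where "S = mk ` shift_span J g"
      have "\<exists>h. (\<forall>q\<in>S. inner h q = 0) \<and> inner h (mk w) \<noteq> 0"
      proof (rule proj_orth[where e=e and pz="mk (\<lambda>j. 0)"])
        show "p + q \<in> S" if pqS: "p \<in> S" "q \<in> S" for p q
        proof -
          obtain p' q' where pq: "p' \<in> shift_span J g" "q' \<in> shift_span J g" "p = mk p'" "q = mk q'"
            using pqS by (auto simp: S_def)
          have "p + q = mk (\<lambda>j. p' j + q' j)"
            using pq mk_add span_H2[OF cs gH] by auto
          moreover have "(\<lambda>j. p' j + q' j) \<in> shift_span J g" by (rule span_add[OF cs pq(1,2)])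
          ultimately show ?thesis by (simp add: S_def)
        qed
        show "c *\<^sub>R p \<in> S" if pS: "p \<in> S" for c p
        proof -
          obtain p' where pq: "p' \<in> shift_span J g" "p = mk p'"
            using pS by (auto simp: S_def)
          have "c *\<^sub>R p = mk (\<lambda>j. c *\<^sub>R p' j)"
            using pq mk_scale span_H2[OF cs gH] by auto
          moreover have "(\<lambda>j. c *\<^sub>R p' j) \<in> shift_span J g" by (rule span_scale[OF cs pq(1)])
          ultimately show ?thesis by (simp add: S_def)
        qed
        show "mk (\<lambda>j. 0) \<in> S" unfolding S_def using span_zero[OF cs] by auto
        show "0 < e" by (rule e)
        show "\<And>p. p \<in> S \<Longrightarrow> e \<le> norm (mk w - p)"
          unfolding S_def using far0 norm_mk_diff[OF wH] span_H2[OF cs gH] by auto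
      qed
      then obtain hl where hS: "\<forall>q\<in>S. inner hl q = 0" and hw: "inner hl (mk w) \<noteq> 0" by blast
      define hv where "hv = vec hl"
      have hvH: "hv \<in> H2" by (simp add: hv_def vec_in)
      have vsp: "(\<lambda>j. cscale J c' ((bshift ^^ (p - N)) g j)) \<in> shift_span J g" for c' p
        by (rule span_single[OF cs])
      have fp: "(\<lambda>j. f (j + p)) \<in> H2" for p
        using fH summable_iff_shift[of "\<lambda>l. (norm (f l))\<^sup>2" p] by (simp add: H2_def)
      have orth1: "\<forall>p\<ge>N. (\<Sum>i. inner (hv i) (f (i + p))) = 0"
      proof (intro allI impI)
        fix p assume pN: "N \<le> p"
        have e1: "(\<lambda>j. cscale J 1 ((bshift ^^ (p - N)) g j)) = (\<lambda>j. f (j + p))"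
          using pN by (simp add: cscale_one[OF cs] g_def bshift_pow)
        have "mk (\<lambda>j. f (j + p)) \<in> S" unfolding S_def using vsp[of 1 p] e1 by auto
        hence "inner hl (mk (\<lambda>j. f (j + p))) = 0" using hS by blast
        thus "(\<Sum>i. inner (hv i) (f (i + p))) = 0" by (simp add: inner_mk[OF fp] hv_def)
      qed
      have hJH: "(\<lambda>i. J (hv i)) \<in> H2" by (rule J_H2[OF cs hvH])
      have orth2: "\<forall>p\<ge>N. (\<Sum>i. inner (J (hv i)) (f (i + p))) = 0"
      proof (intro allI impI)
        fix p assume pN: "N \<le> p"
        have e1: "(\<lambda>j. cscale J \<i> ((bshift ^^ (p - N)) g j)) = (\<lambda>j. J (f (j + p)))"
          using pN by (simp add: cscale_i[OF cs] g_def bshift_pow)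
        have fJ: "(\<lambda>j. J (f (j + p))) \<in> H2" by (rule J_H2[OF cs fp])
        have "mk (\<lambda>j. J (f (j + p))) \<in> S" unfolding S_def using vsp[of \<i> p] e1 by auto
        hence "inner hl (mk (\<lambda>j. J (f (j + p)))) = 0" using hS by blast
        hence z: "(\<Sum>i. inner (hv i) (J (f (i + p)))) = 0" by (simp add: inner_mk[OF fJ] hv_def)
        have "(\<Sum>i. inner (J (hv i)) (f (i + p))) = (\<Sum>i. - inner (hv i) (J (f (i + p))))"
          by (simp add: J_skew[OF cs])
        also have "\<dots> = - (\<Sum>i. inner (hv i) (J (f (i + p))))"
          by (rule suminf_minus) (rule H2_inner_summable[OF hvH fJ])
        finally show "(\<Sum>i. inner (J (hv i)) (f (i + p))) = 0" using z by simp
      qed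
      have z1: "inner (hv m) x = 0" for m
        by (rule orth_x[OF d1 n0 lac fa f0 fH anz C hvH orth1 hx])
      have z2: "inner (J (hv m)) x = 0" for m
        using orth_x[OF d1 n0 lac fa f0 fH anz C hJH orth2 hx] by simp
      have "inner hl (mk w) = (\<Sum>n. inner (hv n) (w n))" by (simp add: inner_mk[OF wH] hv_def)
      also have "\<dots> = (\<Sum>n. (0::real))"
      proof (rule arg_cong[where f=suminf], rule ext)
        fix m
        have "inner (hv m) (J x) = - inner (J (hv m)) x" using J_skew[OF cs, of "hv m" x] by simp
        thus "inner (hv m) (w m) = 0"
          using z1[of m] z2[of m] by (simp add: w cscale_def inner_add_right)
      qed
      finally show False using hw by simp
    qed
  qed
  moreover have "x \<noteq> 0" using nx by auto
  ultimately show ?thesis by blast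
qed


end
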